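(* Each of the following eight sets of four generalized Bell states in $\mathbb{C}^4\otimes\mathbb{C}^4$ is perfectly distinguishable by one-way LOCC using only projective measurements: $\{\ket{\psi_{00}}\}\cup T$ with $T$ one of $\{\ket{\psi_{01}},\ket{\psi_{02}},\ket{\psi_{11}}\}$, $\{\ket{\psi_{01}},\ket{\psi_{02}},\ket{\psi_{31}}\}$, $\{\ket{\psi_{01}},\ket{\psi_{10}},\ket{\psi_{23}}\}$, $\{\ket{\psi_{01}},\ket{\psi_{11}},\ket{\psi_{22}}\}$, $\{\ket{\psi_{01}},\ket{\psi_{22}},\ket{\psi_{31}}\}$, $\{\ket{\psi_{01}},\ket{\psi_{23}},\ket{\psi_{30}}\}$, $\{\ket{\psi_{02}},\ket{\psi_{11}},\ket{\psi_{21}}\}$, $\{\ket{\psi_{02}},\ket{\psi_{21}},\ket{\psi_{31}}\}$.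
   Context: Generalized Bell states in $\mathbb{C}^4\otimes\mathbb{C}^4$ (Alice holds the first factor, Bob the second): $\ket{\psi_{nm}}=\frac12\sum_{j=0}^{3}e^{2\pi i jn/4}\ket{j}_A\ket{j\oplus_4 m}_B$ for $n,m\in\{0,1,2,3\}$, where $j\oplus_4 m=(j+m)\bmod 4$. Perfect distinguishability by one-way LOCC using only projective measurements means: one party performs a projective measurement on her subsystem, communicates the outcome classically, and the other party then performs a projective measurement (depending on that outcome) whose result identifies with certainty which state of the set was shared. *)

theory Defs
  imports Complex_Main
begin

text \<open>Operators on \<open>\<complex>\<^sup>4\<close> are represented as functions
  \<open>nat \<Rightarrow> nat \<Rightarrow> complex\<close> of which only the entries with indices \<open>< 4\<close> matter
  (computational basis \<open>|0>,...,|3>\<close>). Vectors of \<open>\<complex>\<^sup>4 \<otimes> \<complex>\<^sup>4\<close> are represented as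
  \<open>nat \<Rightarrow> nat \<Rightarrow> complex\<close>, \<open>v j k\<close> being the coefficient of \<open>|j>_A |k>_B\<close>
  (again only \<open>j, k < 4\<close> matter).\<close>

type_synonym cmat = "nat \<Rightarrow> nat \<Rightarrow> complex"
type_synonym bvec = "nat \<Rightarrow> nat \<Rightarrow> complex"

definition bell :: "nat \<Rightarrow> nat \<Rightarrow> bvec" where
  "bell n m = (\<lambda>j k. if j < 4 \<and> k = (j + m) mod 4
      then exp (2 * pi * \<i> * of_nat (j * n) / 4) / 2 else 0)"

definition mmul :: "cmat \<Rightarrow> cmat \<Rightarrow> cmat" where
  "mmul A B = (\<lambda>i k. \<Sum>j<4. A i j * B j k)"

definition is_projector :: "cmat \<Rightarrow> bool" where
  "is_projector P \<longleftrightarrow> (\<forall>i<4. \<forall>j<4. mmul P P i j = P i j \<and> cnj (P j i) = P i j)"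

definition proj_meas :: "cmat list \<Rightarrow> bool" where
  "proj_meas Ps \<longleftrightarrow>
     (\<forall>a<length Ps. is_projector (Ps ! a)) \<and>
     (\<forall>a<length Ps. \<forall>b<length Ps. a \<noteq> b \<longrightarrow>
        (\<forall>i<4. \<forall>j<4. mmul (Ps ! a) (Ps ! b) i j = 0)) \<and>
     (\<forall>i<4. \<forall>j<4. (\<Sum>a<length Ps. (Ps ! a) i j) = (if i = j then 1 else 0))"

definition tensor_apply :: "cmat \<Rightarrow> cmat \<Rightarrow> bvec \<Rightarrow> bvec" where
  "tensor_apply P Q v = (\<lambda>j k. \<Sum>j'<4. \<Sum>k'<4. P j j' * Q k k' * v j' k')"

definition bvec_zero :: "bvec \<Rightarrow> bool" where
  "bvec_zero v \<longleftrightarrow> (\<forall>j<4. \<forall>k<4. v j k = 0)"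

text \<open>One-way LOCC with projective measurements, Alice measuring first:
  Alice measures \<open>Ps\<close>, announces outcome \<open>a\<close>, Bob measures \<open>Qs a\<close> with outcome \<open>b\<close>,
  and the guess \<open>g a b\<close> must equal the label of the shared state whenever the outcome
  pair \<open>(a,b)\<close> occurs with nonzero probability, i.e. \<open>(P_a \<otimes> Q^a_b) \<psi> \<noteq> 0\<close>.\<close>
definition oneway_AB :: "(nat \<times> nat) set \<Rightarrow> bool" where
  "oneway_AB S \<longleftrightarrow> (\<exists>Ps Qs g. proj_meas Ps \<and> (\<forall>a<length Ps. proj_meas (Qs a)) \<and>
     (\<forall>(n, m)\<in>S. \<forall>a<length Ps. \<forall>b<length (Qs a).
        \<not> bvec_zero (tensor_apply (Ps ! a) (Qs a ! b) (bell n m)) \<longrightarrow> g a b = (n, m)))"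

definition oneway_BA :: "(nat \<times> nat) set \<Rightarrow> bool" where
  "oneway_BA S \<longleftrightarrow> (\<exists>Qs Ps g. proj_meas Qs \<and> (\<forall>b<length Qs. proj_meas (Ps b)) \<and>
     (\<forall>(n, m)\<in>S. \<forall>b<length Qs. \<forall>a<length (Ps b).
        \<not> bvec_zero (tensor_apply (Ps b ! a) (Qs ! b) (bell n m)) \<longrightarrow> g b a = (n, m)))"

definition oneway_proj_distinguishable :: "(nat \<times> nat) set \<Rightarrow> bool" where
  "oneway_proj_distinguishable S \<longleftrightarrow> oneway_AB S \<or> oneway_BA S"

end

theory Submission
  imports Defs
begin

lemma exp_quarter: "exp (2 * pi * \<i> * of_nat k / 4) = \<i> ^ k"
proof -
  have e: "exp (\<i> * of_real (pi/2)) = \<i>"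
    using cis_conv_exp[of "pi/2"] by (simp add: cis.ctr complex_eq_iff)
  have "exp (2 * pi * \<i> * of_nat k / 4) = exp (of_nat k * (\<i> * of_real (pi/2)))"
    by (rule arg_cong[where f=exp]) (simp add: field_simps)
  also have "\<dots> = exp (\<i> * of_real (pi/2)) ^ k" by (rule exp_of_nat_mult)
  finally show ?thesis using e by simp
qed

lemma i_pow_mod: "\<i> ^ k = \<i> ^ (k mod 4)"
proof -
  have i4: "\<i>^4 = (1::complex)" by (simp add: power_mult[of _ 2 2, simplified])
  have "\<i> ^ k = \<i> ^ (4 * (k div 4) + k mod 4)" by simp
  also have "\<dots> = (\<i>^4) ^ (k div 4) * \<i> ^ (k mod 4)" by (simp only: power_add power_mult)
  also have "\<dots> = \<i> ^ (k mod 4)" by (simp only: i4 power_one mult_1)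
  finally show ?thesis .
qed

lemma bell_eq: "bell n m = (\<lambda>j k. if j < 4 \<and> k = (j + m) mod 4
      then \<i> ^ ((j * n) mod 4) / 2 else 0)"
  unfolding bell_def using exp_quarter i_pow_mod by metis

lemma i3: "\<i> ^ 3 = - \<i>" by (simp add: eval_nat_numeral)

lemma sum4: "(\<Sum>j<(4::nat). f j) = f 0 + f 1 + f 2 + (f 3 :: complex)"
  by (simp add: eval_nat_numeral)

lemma all4: "(\<forall>j<4::nat. P j) \<longleftrightarrow> P 0 \<and> P 1 \<and> P 2 \<and> P 3"
  by (auto simp add: eval_nat_numeral less_Suc_eq)

definition al :: "nat \<Rightarrow> nat \<Rightarrow> complex" where
  "al a j = [[0,1,0,\<i>],[0,1,0,-\<i>],[1,0,\<i>,0],[1,0,-\<i>,0]] ! a ! j"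

definition PP :: "nat \<Rightarrow> cmat" where
  "PP a = (\<lambda>i j. al a i * cnj (al a j) / 2)"

definition Ps :: "cmat list" where "Ps = [PP 0, PP 1, PP 2, PP 3]"

lemma len_Ps: "length Ps = 4" by (simp add: Ps_def)

lemma test: "al 2 2 = \<i> \<and> al 3 2 = - \<i>"
  by (simp add: al_def)

lemma pm_Ps: "proj_meas Ps"
  unfolding proj_meas_def
  apply (simp only: len_Ps all4)
  apply (simp only: Ps_def)
  apply (simp add: is_projector_def mmul_def all4 sum4 PP_def al_def)
  done

definition ov :: "nat \<Rightarrow> nat \<Rightarrow> nat \<times> nat \<Rightarrow> complex" where
  "ov a b s = (\<Sum>j<4. \<Sum>k<4. cnj (al a j) * cnj (al b k) * bell (fst s) (snd s) j k)"

lemma tens: "tensor_apply (PP a) (PP b) v j k =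
   al a j * al b k / 4 * (\<Sum>j'<4. \<Sum>k'<4. cnj (al a j') * cnj (al b k') * v j' k')"
  unfolding tensor_apply_def PP_def
  by (simp add: sum_distrib_left mult_ac)

definition uniq :: "(nat \<times> nat) set \<Rightarrow> bool" where
  "uniq S \<longleftrightarrow> (\<forall>a<4. \<forall>b<4. \<forall>s\<in>S. \<forall>s'\<in>S. ov a b s \<noteq> 0 \<longrightarrow> ov a b s' \<noteq> 0 \<longrightarrow> s = s')"

lemma nz_ov: "\<not> bvec_zero (tensor_apply (PP a) (PP b) (bell n m)) \<Longrightarrow> ov a b (n, m) \<noteq> 0"
  unfolding bvec_zero_def ov_def by (auto simp: tens)

lemma Ps_nth: "a < 4 \<Longrightarrow> Ps ! a = PP a"
  by (auto simp: Ps_def all4[where P="\<lambda>a. [PP 0, PP 1, PP 2, PP 3] ! a = PP a", rule_format] less_Suc_eq eval_nat_numeral)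

lemma uniq_AB: assumes "uniq S" shows "oneway_AB S"
  unfolding oneway_AB_def
proof (intro exI conjI)
  show "proj_meas Ps" by (rule pm_Ps)
  show "\<forall>a<length Ps. proj_meas ((\<lambda>_. Ps) a)" using pm_Ps by simp
  show "\<forall>(n, m)\<in>S. \<forall>a<length Ps. \<forall>b<length ((\<lambda>_. Ps) a).
        \<not> bvec_zero (tensor_apply (Ps ! a) ((\<lambda>_. Ps) a ! b) (bell n m)) \<longrightarrow>
        (\<lambda>a b. SOME s. s \<in> S \<and> ov a b s \<noteq> 0) a b = (n, m)"
  proof (intro ballI allI impI, clarify)
    fix n m a b
    assume S: "(n, m) \<in> S" and a: "a < length Ps" and b: "b < length Ps"
      and nz: "\<not> bvec_zero (tensor_apply (Ps ! a) (Ps ! b) (bell n m))"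
    have a4: "a < 4" and b4: "b < 4" using a b len_Ps by auto
    have o: "ov a b (n, m) \<noteq> 0" using nz nz_ov Ps_nth a4 b4 by metis
    have ex: "\<exists>s. s \<in> S \<and> ov a b s \<noteq> 0" using S o by blast
    from someI_ex[OF ex] have "(SOME s. s \<in> S \<and> ov a b s \<noteq> 0) \<in> S"
      "ov a b (SOME s. s \<in> S \<and> ov a b s \<noteq> 0) \<noteq> 0" by auto
    then show "(SOME s. s \<in> S \<and> ov a b s \<noteq> 0) = (n, m)"
      using assms S o a4 b4 unfolding uniq_def by blast
  qed
qed

lemma u1: "uniq ({(0,0)} \<union> {(0,1), (0,2), (1,1)})"
  unfolding uniq_def
  apply (simp only: all4)
  apply (simp add: ov_def bell_eq sum4 al_def i3)
  done

lemma u2: "uniq ({(0,0)} \<union> {(0,1), (0,2), (3,1)})"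
  unfolding uniq_def
  apply (simp only: all4)
  apply (simp add: ov_def bell_eq sum4 al_def i3)
  done

lemma u3: "uniq ({(0,0)} \<union> {(0,1), (1,0), (2,3)})"
  unfolding uniq_def
  apply (simp only: all4)
  apply (simp add: ov_def bell_eq sum4 al_def i3)
  done

lemma u4: "uniq ({(0,0)} \<union> {(0,1), (1,1), (2,2)})"
  unfolding uniq_def
  apply (simp only: all4)
  apply (simp add: ov_def bell_eq sum4 al_def i3)
  done

lemma u5: "uniq ({(0,0)} \<union> {(0,1), (2,2), (3,1)})"
  unfolding uniq_def
  apply (simp only: all4)
  apply (simp add: ov_def bell_eq sum4 al_def i3)
  done

lemma u6: "uniq ({(0,0)} \<union> {(0,1), (2,3), (3,0)})"
  unfolding uniq_def
  apply (simp only: all4)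
  apply (simp add: ov_def bell_eq sum4 al_def i3)
  done

lemma u7: "uniq ({(0,0)} \<union> {(0,2), (1,1), (2,1)})"
  unfolding uniq_def
  apply (simp only: all4)
  apply (simp add: ov_def bell_eq sum4 al_def i3)
  done

lemma u8: "uniq ({(0,0)} \<union> {(0,2), (2,1), (3,1)})"
  unfolding uniq_def
  apply (simp only: all4)
  apply (simp add: ov_def bell_eq sum4 al_def i3)
  done

theorem theorem4:
  assumes "T \<in> {{(0,1), (0,2), (1,1)}, {(0,1), (0,2), (3,1)}, {(0,1), (1,0), (2,3)},
               {(0,1), (1,1), (2,2)}, {(0,1), (2,2), (3,1)}, {(0,1), (2,3), (3,0)},
               {(0,2), (1,1), (2,1)}, {(0,2), (2,1), (3,1)}}"
  shows "oneway_proj_distinguishable ({(0::nat, 0::nat)} \<union> T)"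
proof -
  from assms have "T = {(0,1), (0,2), (1,1)} \<or> T = {(0,1), (0,2), (3,1)} \<or> T = {(0,1), (1,0), (2,3)} \<or>
               T = {(0,1), (1,1), (2,2)} \<or> T = {(0,1), (2,2), (3,1)} \<or> T = {(0,1), (2,3), (3,0)} \<or>
               T = {(0,2), (1,1), (2,1)} \<or> T = {(0,2), (2,1), (3,1)}" by (simp only: insert_iff empty_iff simp_thms)
  then show ?thesis
    by (elim disjE) (simp_all only: oneway_proj_distinguishable_def uniq_AB u1 u2 u3 u4 u5 u6 u7 u8 simp_thms)
qed

end
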